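(* Let $a,b\ge1$ and $P=[a]\times[b]$. For $1\le i\le a$, with $B=\{i\}\times[b]$, we have $\sum_{p\in B}T_p^-\equiv^q q^{a-i}\frac{[b]_q}{[a+b]_q}$. For $1\le j\le b$, with $B=[a]\times\{j\}$, we have $\sum_{p\in B}T_p^-\equiv^q q^{b-j}\frac{[a]_q}{[a+b]_q}$.
   Context: $[a]\times[b]=\{(i,j)\colon1\le i\le a,1\le j\le b\}$ with $(i,j)\le(i',j')$ iff $i\le i'$ and $j\le j'$. $\mathcal{J}(P)$ is the set of order ideals. For $p\in P$, $I\in\mathcal{J}(P)$: $T_p^+(I)=1$ if $p$ is minimal in $P\setminus I$, else $0$; $T_p^-(I)=1$ if $p$ is maximal in $I$, else $0$; $T_p^q=T_p^+-qT_p^-$ with $q$ an indeterminate. For $f,g\colon\mathcal{J}(P)\to\mathbb{R}(q)$, $f\equiv^q g$ means $f-g=\sum_{p\in P}c_p(q)T_p^q$ for some $c_p(q)\in\mathbb{R}(q)$; an element of $\mathbb{R}(q)$ denotes a constant function. $[m]_q=1+q+\dots+q^{m-1}$. *)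

theory Defs
  imports "HOL-Computational_Algebra.Polynomial" "HOL-Computational_Algebra.Fraction_Field"
begin

type_synonym ratfun = "real poly fract"

definition qvar :: ratfun where
  "qvar = Fract [:0, 1:] 1"

definition qint :: "nat \<Rightarrow> ratfun" where
  "qint m = (\<Sum>k<m. qvar ^ k)"

definition grid :: "nat \<Rightarrow> nat \<Rightarrow> (nat \<times> nat) set" where
  "grid a b = {(i, j). 1 \<le> i \<and> i \<le> a \<and> 1 \<le> j \<and> j \<le> b}"

definition gle :: "nat \<times> nat \<Rightarrow> nat \<times> nat \<Rightarrow> bool" where
  "gle x y \<longleftrightarrow> fst x \<le> fst y \<and> snd x \<le> snd y"

definition order_ideals :: "('a \<Rightarrow> 'a \<Rightarrow> bool) \<Rightarrow> 'a set \<Rightarrow> 'a set set" where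
  "order_ideals le P = {I. I \<subseteq> P \<and> (\<forall>x\<in>I. \<forall>y\<in>P. le y x \<longrightarrow> y \<in> I)}"

definition Tplus :: "('a \<Rightarrow> 'a \<Rightarrow> bool) \<Rightarrow> 'a set \<Rightarrow> 'a \<Rightarrow> 'a set \<Rightarrow> ratfun" where
  "Tplus le P p I = (if p \<in> P - I \<and> (\<forall>r\<in>P - I. le r p \<longrightarrow> r = p) then 1 else 0)"

definition Tminus :: "('a \<Rightarrow> 'a \<Rightarrow> bool) \<Rightarrow> 'a set \<Rightarrow> 'a \<Rightarrow> 'a set \<Rightarrow> ratfun" where
  "Tminus le P p I = (if p \<in> I \<and> (\<forall>r\<in>I. le p r \<longrightarrow> r = p) then 1 else 0)"

definition Tq :: "('a \<Rightarrow> 'a \<Rightarrow> bool) \<Rightarrow> 'a set \<Rightarrow> 'a \<Rightarrow> 'a set \<Rightarrow> ratfun" where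
  "Tq le P p I = Tplus le P p I - qvar * Tminus le P p I"

definition qequiv :: "('a \<Rightarrow> 'a \<Rightarrow> bool) \<Rightarrow> 'a set \<Rightarrow> ('a set \<Rightarrow> ratfun) \<Rightarrow> ('a set \<Rightarrow> ratfun) \<Rightarrow> bool" where
  "qequiv le P f g \<longleftrightarrow> (\<exists>c :: 'a \<Rightarrow> ratfun. \<forall>I\<in>order_ideals le P.
      f I - g I = (\<Sum>p\<in>P. c p * Tq le P p I))"

end

theory Submission
  imports Defs "HOL-Computational_Algebra.Polynomial_Factorial"
begin


definition qZ :: "('a \<Rightarrow> 'a \<Rightarrow> bool) \<Rightarrow> 'a set \<Rightarrow> ('a set \<Rightarrow> ratfun) \<Rightarrow> bool" where
  "qZ le P f \<longleftrightarrow> qequiv le P f (\<lambda>_. 0)"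

lemma qequiv_iff: "qequiv le P f g \<longleftrightarrow> qZ le P (\<lambda>I. f I - g I)"
  by (simp add: qZ_def qequiv_def)

lemma qZ_lin: "qZ le P f \<Longrightarrow> qZ le P g \<Longrightarrow> qZ le P (\<lambda>I. x * f I + y * g I)"
proof -
  assume "qZ le P f" "qZ le P g"
  then obtain c1 c2 where c1: "\<forall>I\<in>order_ideals le P. f I = (\<Sum>p\<in>P. c1 p * Tq le P p I)"
    and c2: "\<forall>I\<in>order_ideals le P. g I = (\<Sum>p\<in>P. c2 p * Tq le P p I)"
    by (auto simp: qZ_def qequiv_def)
  show ?thesis unfolding qZ_def qequiv_def
  proof (intro exI[of _ "\<lambda>p. x * c1 p + y * c2 p"] ballI)
    fix I assume I: "I \<in> order_ideals le P"
    show "x * f I + y * g I - 0 = (\<Sum>p\<in>P. (x * c1 p + y * c2 p) * Tq le P p I)"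
      using c1 c2 I by (simp add: algebra_simps sum.distrib sum_distrib_left)
  qed
qed

lemma qZ_cong: "qZ le P f \<Longrightarrow> (\<And>I. I \<in> order_ideals le P \<Longrightarrow> f I = g I) \<Longrightarrow> qZ le P g"
  by (auto simp: qZ_def qequiv_def)

lemma qZ_0: "qZ le P (\<lambda>_. 0)"
  unfolding qZ_def qequiv_def by (intro exI[of _ "\<lambda>_. 0"]) simp

definition lam :: "nat \<Rightarrow> (nat \<times> nat) set \<Rightarrow> nat \<Rightarrow> nat" where
  "lam b I k = Max (insert 0 {j\<in>{1..b}. (k,j)\<in>I})"

lemma ideal_sub: "I \<in> order_ideals gle (grid a b) \<Longrightarrow> I \<subseteq> grid a b"
  by (simp add: order_ideals_def)
lemma ideal_down: "I \<in> order_ideals gle (grid a b) \<Longrightarrow> x \<in> I \<Longrightarrow> y \<in> grid a b \<Longrightarrow> gle y x \<Longrightarrow> y \<in> I"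
  by (simp add: order_ideals_def)

lemma lam_le: "lam b I k \<le> b"
  unfolding lam_def by (subst Max_le_iff) auto

lemma lam_ge: "1 \<le> j \<Longrightarrow> j \<le> b \<Longrightarrow> (k,j) \<in> I \<Longrightarrow> j \<le> lam b I k"
  unfolding lam_def by (rule Max_ge) auto

lemma lam_in: "1 \<le> lam b I k \<Longrightarrow> (k, lam b I k) \<in> I"
proof -
  assume h: "1 \<le> lam b I k"
  have "lam b I k \<in> insert 0 {j\<in>{1..b}. (k,j)\<in>I}" unfolding lam_def by (rule Max_in) auto
  with h show ?thesis by auto
qed

lemma lam_iff:
  assumes I: "I \<in> order_ideals gle (grid a b)" and j: "1 \<le> j" "j \<le> b" and k: "1 \<le> k" "k \<le> a"
  shows "(k,j) \<in> I \<longleftrightarrow> j \<le> lam b I k"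
proof
  assume "(k,j) \<in> I" then show "j \<le> lam b I k" using j lam_ge by blast
next
  assume h: "j \<le> lam b I k"
  then have "(k, lam b I k) \<in> I" using j lam_in by (meson order_trans)
  moreover have "(k,j) \<in> grid a b" using j k by (simp add: grid_def)
  ultimately show "(k,j) \<in> I" using ideal_down[OF I] h by (simp add: gle_def)
qed

lemma lam_zero:
  assumes I: "I \<in> order_ideals gle (grid a b)" and k: "k = 0 \<or> a < k"
  shows "lam b I k = 0"
proof (rule ccontr)
  assume "lam b I k \<noteq> 0"
  then have "(k, lam b I k) \<in> I" using lam_in by simp
  then have "(k, lam b I k) \<in> grid a b" using ideal_sub[OF I] by blast
  then show False using k by (simp add: grid_def)
qed

lemma lam_anti:
  assumes I: "I \<in> order_ideals gle (grid a b)" and k: "1 \<le> k'" "k' \<le> k"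
  shows "lam b I k \<le> lam b I k'"
proof (cases "lam b I k = 0")
  case False
  then have m: "(k, lam b I k) \<in> I" using lam_in by simp
  then have g: "(k, lam b I k) \<in> grid a b" using ideal_sub[OF I] by blast
  then have "(k', lam b I k) \<in> grid a b" using k by (simp add: grid_def)
  then have "(k', lam b I k) \<in> I" using ideal_down[OF I m] k by (simp add: gle_def)
  then show ?thesis using lam_ge g by (simp add: grid_def)
qed simp

lemma Tminus_lam:
  assumes I: "I \<in> order_ideals gle (grid a b)" and p: "(k,j) \<in> grid a b"
  shows "Tminus gle (grid a b) (k,j) I = (if j = lam b I k \<and> lam b I (k+1) < j then 1 else 0)"
proof -
  have k: "1 \<le> k" "k \<le> a" and j: "1 \<le> j" "j \<le> b" using p by (auto simp: grid_def)
  have "((k,j) \<in> I \<and> (\<forall>r\<in>I. gle (k,j) r \<longrightarrow> r = (k,j))) \<longleftrightarrow> (j = lam b I k \<and> lam b I (k+1) < j)"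
  proof
    assume h: "(k,j) \<in> I \<and> (\<forall>r\<in>I. gle (k,j) r \<longrightarrow> r = (k,j))"
    then have jl: "j \<le> lam b I k" using lam_iff[OF I j k] by simp
    have "j = lam b I k"
    proof (rule ccontr)
      assume "j \<noteq> lam b I k"
      then have "(k, lam b I k) \<in> I" using jl j lam_in by simp
      then show False using h jl \<open>j \<noteq> lam b I k\<close> by (auto simp: gle_def)
    qed
    moreover have "lam b I (k+1) < j"
    proof (rule ccontr)
      assume "\<not> lam b I (k+1) < j"
      then have "(k+1, lam b I (k+1)) \<in> I" using j lam_in by simp
      then show False using h \<open>\<not> lam b I (k+1) < j\<close> by (auto simp: gle_def)
    qed
    ultimately show "j = lam b I k \<and> lam b I (k+1) < j" by simp
  next
    assume h: "j = lam b I k \<and> lam b I (k+1) < j"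
    have "(k,j) \<in> I" using lam_iff[OF I j k] h by simp
    moreover have "r = (k,j)" if r: "r \<in> I" "gle (k,j) r" for r
    proof -
      obtain k' j' where rr: "r = (k',j')" by fastforce
      have rg: "(k',j') \<in> grid a b" using r rr ideal_sub[OF I] by blast
      show ?thesis
      proof (cases "k' = k")
        case True
        then have "j' \<le> lam b I k" using rg r rr lam_ge by (auto simp: grid_def)
        then show ?thesis using True rr r h by (auto simp: gle_def)
      next
        case False
        then have kk: "k + 1 \<le> k'" using r rr by (auto simp: gle_def)
        have g2: "(k+1, j') \<in> grid a b" using rg kk by (auto simp: grid_def)
        then have "(k+1, j') \<in> I" using ideal_down[OF I, of "(k',j')" "(k+1,j')"] r rr kk by (auto simp: gle_def)
        then have "j' \<le> lam b I (k+1)" using lam_ge g2 by (auto simp: grid_def)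
        then show ?thesis using h r rr by (auto simp: gle_def)
      qed
    qed
    ultimately show "(k,j) \<in> I \<and> (\<forall>r\<in>I. gle (k,j) r \<longrightarrow> r = (k,j))" by blast
  qed
  then show ?thesis unfolding Tminus_def by simp
qed

lemma Tplus_lam:
  assumes I: "I \<in> order_ideals gle (grid a b)" and p: "(k,j) \<in> grid a b"
  shows "Tplus gle (grid a b) (k,j) I = (if j = lam b I k + 1 \<and> (k = 1 \<or> j \<le> lam b I (k-1)) then 1 else 0)"
proof -
  have k: "1 \<le> k" "k \<le> a" and j: "1 \<le> j" "j \<le> b" using p by (auto simp: grid_def)
  have "((k,j) \<in> grid a b - I \<and> (\<forall>r\<in>grid a b - I. gle r (k,j) \<longrightarrow> r = (k,j))) \<longleftrightarrow>
        (j = lam b I k + 1 \<and> (k = 1 \<or> j \<le> lam b I (k-1)))"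
  proof
    assume h: "(k,j) \<in> grid a b - I \<and> (\<forall>r\<in>grid a b - I. gle r (k,j) \<longrightarrow> r = (k,j))"
    then have jl: "lam b I k < j" using lam_iff[OF I j k] by simp
    have "j = lam b I k + 1"
    proof (rule ccontr)
      assume "j \<noteq> lam b I k + 1"
      then have j2: "lam b I k < j - 1" "1 \<le> j - 1" using jl by auto
      have "(k, j-1) \<in> grid a b" using k j j2 by (auto simp: grid_def)
      moreover have "(k, j-1) \<notin> I" using lam_iff[OF I _ _ k, of "j-1"] j j2 by auto
      ultimately have "(k, j-1) \<in> grid a b - I" by blast
      with h have "gle (k,j-1) (k,j) \<longrightarrow> (k,j-1) = (k,j)" by blast
      then show False using j2 by (auto simp: gle_def)
    qed
    moreover have "k = 1 \<or> j \<le> lam b I (k-1)"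
    proof (rule ccontr)
      assume c: "\<not> (k = 1 \<or> j \<le> lam b I (k-1))"
      have "(k-1, j) \<in> grid a b" using k j c by (auto simp: grid_def)
      moreover have "1 \<le> k-1" "k-1 \<le> a" using k c by auto
      then have "(k-1, j) \<notin> I" using lam_iff[OF I j \<open>1 \<le> k-1\<close> \<open>k-1 \<le> a\<close>] c by auto
      ultimately have "(k-1, j) \<in> grid a b - I" by blast
      with h have "gle (k-1,j) (k,j) \<longrightarrow> (k-1,j) = (k,j)" by blast
      then show False using c k by (auto simp: gle_def)
    qed
    ultimately show "j = lam b I k + 1 \<and> (k = 1 \<or> j \<le> lam b I (k-1))" by simp
  next
    assume h: "j = lam b I k + 1 \<and> (k = 1 \<or> j \<le> lam b I (k-1))"
    have "(k,j) \<notin> I" using lam_iff[OF I j k] h by simp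
    moreover have "r = (k,j)" if r: "r \<in> grid a b - I" "gle r (k,j)" for r
    proof -
      obtain k' j' where rr: "r = (k',j')" by fastforce
      have rg: "1 \<le> k'" "k' \<le> a" "1 \<le> j'" "j' \<le> b" using r rr by (auto simp: grid_def)
      have kk: "k' \<le> k" "j' \<le> j" using r rr by (auto simp: gle_def)
      have nl: "lam b I k' < j'" using lam_iff[OF I rg(3,4) rg(1,2)] r rr by auto
      show ?thesis
      proof (cases "k' = k")
        case True
        then show ?thesis using nl h kk rr by auto
      next
        case False
        then have "lam b I (k-1) \<le> lam b I k'" using lam_anti[OF I] rg kk by simp
        then show ?thesis using False h kk nl rg by auto
      qed
    qed
    ultimately show "(k,j) \<in> grid a b - I \<and> (\<forall>r\<in>grid a b - I. gle r (k,j) \<longrightarrow> r = (k,j))"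
      using p by blast
  qed
  then show ?thesis unfolding Tplus_def by simp
qed

lemma sum_delta_cond:
  "finite S \<Longrightarrow> (\<Sum>j\<in>S. if j = c \<and> Q j then (1::ratfun) else 0) = (if c \<in> S \<and> Q c then 1 else 0)"
proof -
  assume "finite S"
  have "(\<Sum>j\<in>S. if j = c \<and> Q j then (1::ratfun) else 0) = (\<Sum>j\<in>S. if j = c then (if Q c then 1 else 0) else 0)"
    by (rule sum.cong) auto
  also have "\<dots> = (if c \<in> S \<and> Q c then 1 else 0)" using \<open>finite S\<close> by simp
  finally show ?thesis .
qed

definition RM :: "nat \<Rightarrow> nat \<Rightarrow> nat \<Rightarrow> (nat \<times> nat) set \<Rightarrow> ratfun" where
  "RM a b k I = (\<Sum>j\<in>{1..b}. Tminus gle (grid a b) (k,j) I)"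
definition RP :: "nat \<Rightarrow> nat \<Rightarrow> nat \<Rightarrow> (nat \<times> nat) set \<Rightarrow> ratfun" where
  "RP a b k I = (\<Sum>j\<in>{1..b}. Tplus gle (grid a b) (k,j) I)"
definition CM :: "nat \<Rightarrow> nat \<Rightarrow> nat \<Rightarrow> (nat \<times> nat) set \<Rightarrow> ratfun" where
  "CM a b j I = (\<Sum>i\<in>{1..a}. Tminus gle (grid a b) (i,j) I)"
definition CP :: "nat \<Rightarrow> nat \<Rightarrow> nat \<Rightarrow> (nat \<times> nat) set \<Rightarrow> ratfun" where
  "CP a b j I = (\<Sum>i\<in>{1..a}. Tplus gle (grid a b) (i,j) I)"

lemma RM_lam:
  assumes I: "I \<in> order_ideals gle (grid a b)" and k: "1 \<le> k" "k \<le> a"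
  shows "RM a b k I = (if lam b I (k+1) < lam b I k then 1 else 0)"
proof -
  have "RM a b k I = (\<Sum>j\<in>{1..b}. if j = lam b I k \<and> lam b I (k+1) < j then 1 else 0)"
    unfolding RM_def
  proof (rule sum.cong)
    fix j assume "j \<in> {1..b}"
    then have "(k,j) \<in> grid a b" using k by (simp add: grid_def)
    then show "Tminus gle (grid a b) (k,j) I = (if j = lam b I k \<and> lam b I (k+1) < j then 1 else 0)"
      by (rule Tminus_lam[OF I])
  qed simp
  also have "\<dots> = (if lam b I (k+1) < lam b I k then 1 else 0)"
    using lam_le[of b I k] by (subst sum_delta_cond) auto
  finally show ?thesis .
qed

lemma RP_lam:
  assumes I: "I \<in> order_ideals gle (grid a b)" and k: "1 \<le> k" "k \<le> a"
  shows "RP a b k I = (if lam b I k < b \<and> (k = 1 \<or> lam b I k < lam b I (k-1)) then 1 else 0)"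
proof -
  have "RP a b k I = (\<Sum>j\<in>{1..b}. if j = lam b I k + 1 \<and> (k = 1 \<or> j \<le> lam b I (k-1)) then 1 else 0)"
    unfolding RP_def
  proof (rule sum.cong)
    fix j assume "j \<in> {1..b}"
    then have "(k,j) \<in> grid a b" using k by (simp add: grid_def)
    then show "Tplus gle (grid a b) (k,j) I = (if j = lam b I k + 1 \<and> (k = 1 \<or> j \<le> lam b I (k-1)) then 1 else 0)"
      by (rule Tplus_lam[OF I])
  qed simp
  also have "\<dots> = (if lam b I k < b \<and> (k = 1 \<or> lam b I k < lam b I (k-1)) then 1 else 0)"
    by (subst sum_delta_cond) auto
  finally show ?thesis .
qed

lemma F1:
  assumes I: "I \<in> order_ideals gle (grid a b)" and k: "2 \<le> k" "k \<le> a"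
  shows "RP a b k I = RM a b (k-1) I"
  using RP_lam[OF I, of k] RM_lam[OF I, of "k-1"] k lam_le[of b I "k-1"] by auto

lemma swap_ideal:
  assumes I: "I \<in> order_ideals gle (grid a b)"
  shows "prod.swap ` I \<in> order_ideals gle (grid b a)"
  using I unfolding order_ideals_def grid_def gle_def by auto

lemma grid_swap: "grid b a = prod.swap ` grid a b"
  unfolding grid_def by auto

lemma mem_swap: "(j,i) \<in> prod.swap ` S \<longleftrightarrow> (i,j) \<in> S"
  by force

lemma ball_swap: "(\<forall>r\<in>prod.swap ` S. P r) \<longleftrightarrow> (\<forall>r\<in>S. P (prod.swap r))"
  by blast

lemma swap_diff: "prod.swap ` (A - B) = prod.swap ` A - prod.swap ` (B :: ('a \<times> 'b) set)"
  by (rule image_set_diff) (auto intro: injI)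

lemma gle_swap1: "gle (prod.swap r) (j,i) \<longleftrightarrow> gle r (i,j)"
  by (cases r) (auto simp: gle_def)
lemma gle_swap2: "gle (j,i) (prod.swap r) \<longleftrightarrow> gle (i,j) r"
  by (cases r) (auto simp: gle_def)
lemma eq_swap: "prod.swap r = (j,i) \<longleftrightarrow> r = (i,j)"
  by (cases r) auto

lemma Tminus_swap: "Tminus gle (grid a b) (i,j) I = Tminus gle (grid b a) (j,i) (prod.swap ` I)"
  unfolding Tminus_def mem_swap ball_swap gle_swap2 eq_swap ..

lemma Tplus_swap: "Tplus gle (grid a b) (i,j) I = Tplus gle (grid b a) (j,i) (prod.swap ` I)"
proof -
  have e: "grid b a - prod.swap ` I = prod.swap ` (grid a b - I)"
    by (subst grid_swap[of b a]) (rule swap_diff[symmetric])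
  show ?thesis unfolding Tplus_def e mem_swap ball_swap gle_swap1 eq_swap ..
qed

lemma CM_swap: "CM a b j I = RM b a j (prod.swap ` I)"
  unfolding CM_def RM_def by (rule sum.cong[OF refl Tminus_swap])
lemma CP_swap: "CP a b j I = RP b a j (prod.swap ` I)"
  unfolding CP_def RP_def by (rule sum.cong[OF refl Tplus_swap])

lemma F2:
  assumes I: "I \<in> order_ideals gle (grid a b)" and j: "2 \<le> j" "j \<le> b"
  shows "CP a b j I = CM a b (j-1) I"
  unfolding CP_swap CM_swap using F1[OF swap_ideal[OF I] j] .

lemma F3:
  assumes I: "I \<in> order_ideals gle (grid a b)" and ab: "1 \<le> a" "1 \<le> b"
  shows "RP a b 1 I + CM a b b I = 1"
proof -
  have J: "prod.swap ` I \<in> order_ideals gle (grid b a)" by (rule swap_ideal[OF I])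
  have z: "lam a (prod.swap ` I) (b+1) = 0" by (rule lam_zero[OF J]) simp
  have e1: "(b,1) \<in> prod.swap ` I \<longleftrightarrow> 1 \<le> lam a (prod.swap ` I) b" using lam_iff[OF J _ ab(1) ab(2)] ab by simp
  have e2: "(1,b) \<in> I \<longleftrightarrow> b \<le> lam b I 1" using lam_iff[OF I _ _ _ ab(1)] ab by simp
  have e3: "(b,1) \<in> prod.swap ` I \<longleftrightarrow> (1,b) \<in> I" by force
  show ?thesis unfolding CM_swap RM_lam[OF J ab(2) order_refl] RP_lam[OF I order_refl ab(1)] z
    using e1 e2 e3 lam_le[of b I 1] by auto
qed

lemma F4:
  assumes I: "I \<in> order_ideals gle (grid a b)" and ab: "1 \<le> a" "1 \<le> b"
  shows "CP a b 1 I + RM a b a I = 1"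
proof -
  have "RP b a 1 (prod.swap ` I) + CM b a a (prod.swap ` I) = 1"
    by (rule F3[OF swap_ideal[OF I] ab(2,1)])
  moreover have "prod.swap ` prod.swap ` I = I" by (simp add: image_image)
  ultimately show ?thesis unfolding CP_swap CM_swap by simp
qed

lemma grid_prod: "grid a b = {1..a} \<times> {1..b}"
  unfolding grid_def by auto

lemma sum_grid: "(\<Sum>p\<in>grid a b. F p) = (\<Sum>x\<in>{1..a}. \<Sum>y\<in>{1..b}. F (x,y))"
  unfolding grid_prod by (simp add: sum.cartesian_product)

lemma row_qZ:
  assumes k: "1 \<le> k" "k \<le> a"
  shows "qZ gle (grid a b) (\<lambda>I. RP a b k I - qvar * RM a b k I)"
  unfolding qZ_def qequiv_def
proof (intro exI[of _ "\<lambda>p. if fst p = k then 1 else 0"] ballI)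
  fix I
  have "(\<Sum>p\<in>grid a b. (if fst p = k then 1 else 0) * Tq gle (grid a b) p I)
      = (\<Sum>x\<in>{1..a}. \<Sum>y\<in>{1..b}. (if x = k then 1 else 0) * Tq gle (grid a b) (x,y) I)"
    by (subst sum_grid) simp
  also have "\<dots> = (\<Sum>x\<in>{1..a}. if x = k then (\<Sum>y\<in>{1..b}. Tq gle (grid a b) (k,y) I) else 0)"
    by (rule sum.cong) auto
  also have "\<dots> = (\<Sum>y\<in>{1..b}. Tq gle (grid a b) (k,y) I)" using k by simp
  also have "\<dots> = RP a b k I - qvar * RM a b k I"
    unfolding RP_def RM_def Tq_def by (simp add: sum_subtractf sum_distrib_left)
  finally show "RP a b k I - qvar * RM a b k I - 0 = (\<Sum>p\<in>grid a b. (if fst p = k then 1 else 0) * Tq gle (grid a b) p I)"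
    by simp
qed

lemma col_qZ:
  assumes j: "1 \<le> j" "j \<le> b"
  shows "qZ gle (grid a b) (\<lambda>I. CP a b j I - qvar * CM a b j I)"
  unfolding qZ_def qequiv_def
proof (intro exI[of _ "\<lambda>p. if snd p = j then 1 else 0"] ballI)
  fix I
  have "(\<Sum>p\<in>grid a b. (if snd p = j then 1 else 0) * Tq gle (grid a b) p I)
      = (\<Sum>x\<in>{1..a}. \<Sum>y\<in>{1..b}. (if y = j then 1 else 0) * Tq gle (grid a b) (x,y) I)"
    by (subst sum_grid) simp
  also have "\<dots> = (\<Sum>x\<in>{1..a}. Tq gle (grid a b) (x,j) I)"
  proof (rule sum.cong)
    fix x
    have "(\<Sum>y\<in>{1..b}. (if y = j then 1 else 0) * Tq gle (grid a b) (x,y) I)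
        = (\<Sum>y\<in>{1..b}. if y = j then Tq gle (grid a b) (x,y) I else 0)"
      by (rule sum.cong) auto
    then show "(\<Sum>y\<in>{1..b}. (if y = j then 1 else 0) * Tq gle (grid a b) (x,y) I) = Tq gle (grid a b) (x,j) I"
      using j by simp
  qed simp
  also have "\<dots> = CP a b j I - qvar * CM a b j I"
    unfolding CP_def CM_def Tq_def by (simp add: sum_subtractf sum_distrib_left)
  finally show "CP a b j I - qvar * CM a b j I - 0 = (\<Sum>p\<in>grid a b. (if snd p = j then 1 else 0) * Tq gle (grid a b) p I)"
    by simp
qed


lemma qvar_to: "qvar = to_fract [:0,1:]" by (simp add: qvar_def to_fract_def)
lemma qpow: "qvar ^ n = to_fract ([:0,1:] ^ n)"
proof (induction n)
  case 0 then show ?case by simp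
next
  case (Suc n)
  have "qvar ^ Suc n = qvar * to_fract ([:0,1:] ^ n)" using Suc by simp
  also have "\<dots> = to_fract ([:0,1:] * [:0,1:] ^ n)" by (simp only: qvar_to to_fract_mult)
  finally show ?case by (simp only: power_Suc)
qed
lemma one_minus_q_nz: "n \<ge> 1 \<Longrightarrow> 1 - qvar ^ n \<noteq> 0"
proof
  assume "n \<ge> 1" "1 - qvar ^ n = 0"
  then have "to_fract (1 - [:0,1::real:] ^ n) = to_fract 0" by (simp only: qpow to_fract_diff to_fract_1 to_fract_0)
  then have "[:0,1::real:] ^ n = 1" by (simp only: to_fract_eq_iff)
  then have "degree ([:0,1::real:] ^ n) = 0" by simp
  moreover have "degree ([:0,1::real:] ^ n) = n" by (simp add: degree_power_eq)
  ultimately show False using \<open>n \<ge> 1\<close> by simp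
qed
lemma qint_Suc: "qint (Suc n) = qint n + qvar ^ n" by (simp add: qint_def)
lemma qint_mult: "qint n * (1 - qvar) = 1 - qvar ^ n"
proof (induction n)
  case 0 then show ?case by (simp add: qint_def)
next
  case (Suc n)
  have "qint (Suc n) * (1 - qvar) = qint n * (1-qvar) + qvar^n*(1-qvar)" by (simp add: qint_Suc distrib_right)
  also have "\<dots> = 1 - qvar ^ Suc n" unfolding Suc by (simp add: algebra_simps)
  finally show ?case .
qed
lemma qratio: "n \<ge> 1 \<Longrightarrow> qint m / qint n = (1 - qvar^m) / (1 - qvar^n)"
proof -
  assume n: "n \<ge> 1"
  have q1: "1 - qvar \<noteq> 0" using one_minus_q_nz[of 1] by simp
  have "(1 - qvar^m) / (1 - qvar^n) = (qint m * (1 - qvar)) / (qint n * (1 - qvar))" by (simp only: qint_mult)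
  also have "\<dots> = qint m / qint n" using q1 by simp
  finally show ?thesis by simp
qed

lemma alg1:
  fixes q ri ra r0 Q :: "'a::field"
  assumes "1 - q^(a+b) \<noteq> 0"
  shows "ri - Q * ((1 - q^b) / (1 - q^(a+b))) =
    1 * (ri - Q * ra) + (Q / (1 - q^(a+b))) * (q^b * (r0 - q^a * ra) + -1 * ((1 - ra) - q^b * (1 - r0)))"
  using assms by (simp add: field_simps power_add)

lemma alg2:
  fixes q cj cb ra c0 Q :: "'a::field"
  assumes "1 - q^(a+b) \<noteq> 0"
  shows "cj - Q * ((1 - q^a) / (1 - q^(a+b))) =
    1 * (cj - Q * cb) + (Q / (1 - q^(a+b))) * (q^a * ((1 - ra) - q^b * cb) + -1 * ((1 - cb) - q^a * ra))"
  using assms by (simp add: field_simps power_add)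

lemma sum_single_row: "(\<Sum>p\<in>{i}\<times>S. f p) = (\<Sum>j\<in>S. f (i,j))"
proof -
  have "{i}\<times>S = (\<lambda>j. (i,j)) ` S" by auto
  moreover have "inj_on (\<lambda>j. (i,j)) S" by (auto intro: inj_onI)
  ultimately show ?thesis by (simp add: sum.reindex)
qed

lemma sum_single_col: "(\<Sum>p\<in>S\<times>{j}. f p) = (\<Sum>i\<in>S. f (i,j))"
proof -
  have "S\<times>{j} = (\<lambda>i. (i,j)) ` S" by auto
  moreover have "inj_on (\<lambda>i. (i,j)) S" by (auto intro: inj_onI)
  ultimately show ?thesis by (simp add: sum.reindex)
qed

theorem theorem5p12:
  fixes a b :: nat
  assumes "1 \<le> a" and "1 \<le> b"
  shows "(\<forall>i. 1 \<le> i \<and> i \<le> a \<longrightarrow>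
           qequiv gle (grid a b)
             (\<lambda>I. \<Sum>p\<in>{i} \<times> {1..b}. Tminus gle (grid a b) p I)
             (\<lambda>I. qvar ^ (a - i) * qint b / qint (a + b)))
       \<and> (\<forall>j. 1 \<le> j \<and> j \<le> b \<longrightarrow>
           qequiv gle (grid a b)
             (\<lambda>I. \<Sum>p\<in>{1..a} \<times> {j}. Tminus gle (grid a b) p I)
             (\<lambda>I. qvar ^ (b - j) * qint a / qint (a + b)))"
proof -
  define Rx where "Rx k I = (if k = 0 then RP a b 1 I else RM a b k I)" for k I
  define Cx where "Cx j I = (if j = 0 then CP a b 1 I else CM a b j I)" for j I
  have Q1: "qZ gle (grid a b) (\<lambda>I. Rx (k-1) I - qvar * Rx k I)" if k: "1 \<le> k" "k \<le> a" for k
  proof (rule qZ_cong[OF row_qZ[OF k]])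
    fix I assume I: "I \<in> order_ideals gle (grid a b)"
    show "RP a b k I - qvar * RM a b k I = Rx (k-1) I - qvar * Rx k I"
    proof (cases "k = 1")
      case True then show ?thesis by (simp add: Rx_def)
    next
      case False then show ?thesis using F1[OF I, of k] k by (simp add: Rx_def)
    qed
  qed
  have C1: "qZ gle (grid a b) (\<lambda>I. Cx (j-1) I - qvar * Cx j I)" if j: "1 \<le> j" "j \<le> b" for j
  proof (rule qZ_cong[OF col_qZ[OF j]])
    fix I assume I: "I \<in> order_ideals gle (grid a b)"
    show "CP a b j I - qvar * CM a b j I = Cx (j-1) I - qvar * Cx j I"
    proof (cases "j = 1")
      case True then show ?thesis by (simp add: Cx_def)
    next
      case False then show ?thesis using F2[OF I, of j] j by (simp add: Cx_def)
    qed
  qed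
  have Qind: "qZ gle (grid a b) (\<lambda>I. Rx (a-m) I - qvar^m * Rx a I)" if "m \<le> a" for m
    using that
  proof (induction m)
    case 0 show ?case by (rule qZ_cong[OF qZ_0]) simp
  next
    case (Suc m)
    have k: "1 \<le> a - m" "a - m \<le> a" using Suc.prems by auto
    have "qZ gle (grid a b) (\<lambda>I. 1 * (Rx (a-m-1) I - qvar * Rx (a-m) I) + qvar * (Rx (a-m) I - qvar^m * Rx a I))"
      by (rule qZ_lin[OF Q1[OF k] Suc.IH]) (use Suc.prems in simp)
    then show ?case
      by (rule qZ_cong) (simp add: algebra_simps)
  qed
  have Cind: "qZ gle (grid a b) (\<lambda>I. Cx (b-m) I - qvar^m * Cx b I)" if "m \<le> b" for m
    using that
  proof (induction m)
    case 0 show ?case by (rule qZ_cong[OF qZ_0]) simp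
  next
    case (Suc m)
    have k: "1 \<le> b - m" "b - m \<le> b" using Suc.prems by auto
    have "qZ gle (grid a b) (\<lambda>I. 1 * (Cx (b-m-1) I - qvar * Cx (b-m) I) + qvar * (Cx (b-m) I - qvar^m * Cx b I))"
      by (rule qZ_lin[OF C1[OF k] Suc.IH]) (use Suc.prems in simp)
    then show ?case
      by (rule qZ_cong) (simp add: algebra_simps)
  qed
  have u2: "qZ gle (grid a b) (\<lambda>I. Rx 0 I - qvar^a * Rx a I)" using Qind[of a] by simp
  have u3: "qZ gle (grid a b) (\<lambda>I. Cx 0 I - qvar^b * Cx b I)" using Cind[of b] by simp
  have link1: "Cx 0 I = 1 - Rx a I" if "I \<in> order_ideals gle (grid a b)" for I
    using F4[OF that assms] assms by (simp add: Rx_def Cx_def algebra_simps)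
  have link2: "Rx 0 I = 1 - Cx b I" if "I \<in> order_ideals gle (grid a b)" for I
    using F3[OF that assms] assms by (simp add: Rx_def Cx_def algebra_simps)
  have link2': "Cx b I = 1 - Rx 0 I" if "I \<in> order_ideals gle (grid a b)" for I
    using link2[OF that] by simp
  have d: "1 - qvar^(a+b) \<noteq> 0" using one_minus_q_nz assms by simp
  have part1: "qequiv gle (grid a b)
             (\<lambda>I. \<Sum>p\<in>{i} \<times> {1..b}. Tminus gle (grid a b) p I)
             (\<lambda>I. qvar ^ (a - i) * qint b / qint (a + b))" if i: "1 \<le> i" "i \<le> a" for i
  proof -
    have u1: "qZ gle (grid a b) (\<lambda>I. Rx i I - qvar^(a-i) * Rx a I)" using Qind[of "a-i"] i by simp
    have "qZ gle (grid a b) (\<lambda>I. 1 * (Rx i I - qvar^(a-i) * Rx a I) + (qvar^(a-i) / (1 - qvar^(a+b))) *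
        (qvar^b * (Rx 0 I - qvar^a * Rx a I) + -1 * (Cx 0 I - qvar^b * Cx b I)))"
      by (rule qZ_lin[OF u1 qZ_lin[OF u2 u3]])
    then have "qZ gle (grid a b) (\<lambda>I. (\<Sum>p\<in>{i} \<times> {1..b}. Tminus gle (grid a b) p I) - qvar ^ (a - i) * qint b / qint (a + b))"
    proof (rule qZ_cong)
      fix I assume I: "I \<in> order_ideals gle (grid a b)"
      have s: "(\<Sum>p\<in>{i} \<times> {1..b}. Tminus gle (grid a b) p I) = Rx i I"
        using i by (simp add: sum_single_row Rx_def RM_def)
      have r: "qvar ^ (a - i) * qint b / qint (a + b) = qvar ^ (a - i) * ((1 - qvar^b) / (1 - qvar^(a+b)))"
      proof -
        have r0: "qint b / qint (a + b) = (1 - qvar^b) / (1 - qvar^(a+b))" using qratio[of "a+b" b] assms by simp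
        show ?thesis by (subst r0[symmetric]) (rule times_divide_eq_right[symmetric])
      qed
      show "1 * (Rx i I - qvar^(a-i) * Rx a I) + (qvar^(a-i) / (1 - qvar^(a+b))) *
        (qvar^b * (Rx 0 I - qvar^a * Rx a I) + -1 * (Cx 0 I - qvar^b * Cx b I)) =
        (\<Sum>p\<in>{i} \<times> {1..b}. Tminus gle (grid a b) p I) - qvar ^ (a - i) * qint b / qint (a + b)"
        unfolding s r link1[OF I] link2'[OF I]
        by (rule alg1[OF d, symmetric])
    qed
    then show ?thesis unfolding qequiv_iff .
  qed
  have part2: "qequiv gle (grid a b)
             (\<lambda>I. \<Sum>p\<in>{1..a} \<times> {j}. Tminus gle (grid a b) p I)
             (\<lambda>I. qvar ^ (b - j) * qint a / qint (a + b))" if j: "1 \<le> j" "j \<le> b" for j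
  proof -
    have v1: "qZ gle (grid a b) (\<lambda>I. Cx j I - qvar^(b-j) * Cx b I)" using Cind[of "b-j"] j by simp
    have "qZ gle (grid a b) (\<lambda>I. 1 * (Cx j I - qvar^(b-j) * Cx b I) + (qvar^(b-j) / (1 - qvar^(a+b))) *
        (qvar^a * (Cx 0 I - qvar^b * Cx b I) + -1 * (Rx 0 I - qvar^a * Rx a I)))"
      by (rule qZ_lin[OF v1 qZ_lin[OF u3 u2]])
    then have "qZ gle (grid a b) (\<lambda>I. (\<Sum>p\<in>{1..a} \<times> {j}. Tminus gle (grid a b) p I) - qvar ^ (b - j) * qint a / qint (a + b))"
    proof (rule qZ_cong)
      fix I assume I: "I \<in> order_ideals gle (grid a b)"
      have s: "(\<Sum>p\<in>{1..a} \<times> {j}. Tminus gle (grid a b) p I) = Cx j I"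
        using j by (simp add: sum_single_col Cx_def CM_def)
      have r: "qvar ^ (b - j) * qint a / qint (a + b) = qvar ^ (b - j) * ((1 - qvar^a) / (1 - qvar^(a+b)))"
      proof -
        have r0: "qint a / qint (a + b) = (1 - qvar^a) / (1 - qvar^(a+b))" using qratio[of "a+b" a] assms by simp
        show ?thesis by (subst r0[symmetric]) (rule times_divide_eq_right[symmetric])
      qed
      show "1 * (Cx j I - qvar^(b-j) * Cx b I) + (qvar^(b-j) / (1 - qvar^(a+b))) *
        (qvar^a * (Cx 0 I - qvar^b * Cx b I) + -1 * (Rx 0 I - qvar^a * Rx a I)) =
        (\<Sum>p\<in>{1..a} \<times> {j}. Tminus gle (grid a b) p I) - qvar ^ (b - j) * qint a / qint (a + b)"
        unfolding s r link1[OF I] link2[OF I]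
        by (rule alg2[OF d, symmetric])
    qed
    then show ?thesis unfolding qequiv_iff .
  qed
  show ?thesis using part1 part2 by blast
qed
end
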